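(* For all program states $(s,h)$ and all $f\in\mathbb{T}$, $$\mathsf{ert}[\![\langle e\rangle:=e']\!](f)(s,h)=\begin{cases} f(s,h[s(e)\mapsto s(e')]) & \text{if } s(e)\in\mathrm{dom}(h),\\ \infty & \text{if } s(e)\notin\mathrm{dom}(h),\end{cases}$$ where $\mathsf{ert}[\![\langle e\rangle:=e']\!](f)=[e\mapsto-]\oplus([e\mapsto e']\mathbin{-\!\!\ominus} f)$.
   Context: Fix a finite set $\mathrm{Vars}$ of variables. A stack is $s\colon\mathrm{Vars}\to\mathbb{N}$; a heap is a partial map $h$ from a finite set $\mathrm{dom}(h)\subseteq\mathbb{N}_{>0}$ to $\mathbb{N}$; $h_1\perp h_2$ means disjoint domains, and then $h_1\star h_2$ is their union; $h[\ell\mapsto v]$ (for $\ell\in\mathrm{dom}(h)$) is the heap updated at $\ell$. $\mathsf{States}$ is the set of pairs $(s,h)$; $s(e)$ is the value of a heap-independent arithmetic expression $e$. $\mathbb{T}$ is the set of functions $\mathsf{States}\to[0,\infty]$. Truncated subtraction: $a\dot- b=\max(a-b,0)$, $\infty\dot- b=\infty$ for finite $b$, $a\dot-\infty=0$. $(f\oplus g)(s,h)=\min\{f(s,h_1)+g(s,h_2)\mid h=h_1\star h_2\}$; $(f\mathbin{-\!\!\ominus} g)(s,h)=\sup\{g(s,h\star h')\dot- f(s,h')\mid h'\perp h\}$. $[e\mapsto e'](s,h)=0$ if $\mathrm{dom}(h)=\{s(e)\}$ and $h(s(e))=s(e')$, else $\infty$; $[e\mapsto-](s,h)=0$ if $\mathrm{dom}(h)=\{s(e)\}$,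 else $\infty$. *)

theory Defs
  imports "HOL-Analysis.Analysis" "HOL-Library.Extended_Nonnegative_Real"
begin

type_synonym 'v stack = "'v \<Rightarrow> nat"
type_synonym heap = "nat \<rightharpoonup> nat"
type_synonym 'v state = "'v stack \<times> heap"
type_synonym 'v expr = "'v stack \<Rightarrow> nat"
type_synonym 'v expect = "'v state \<Rightarrow> ennreal"

definition is_heap :: "heap \<Rightarrow> bool" where
  "is_heap h \<longleftrightarrow> finite (dom h) \<and> 0 \<notin> dom h"

definition disj :: "heap \<Rightarrow> heap \<Rightarrow> bool" where
  "disj h1 h2 \<longleftrightarrow> dom h1 \<inter> dom h2 = {}"

definition hunion :: "heap \<Rightarrow> heap \<Rightarrow> heap" where
  "hunion h1 h2 = h1 ++ h2"

definition tminus :: "ennreal \<Rightarrow> ennreal \<Rightarrow> ennreal" where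
  "tminus a b = (if b = \<infinity> then 0 else if a = \<infinity> then \<infinity> else max (a - b) 0)"

definition sepcon :: "'v expect \<Rightarrow> 'v expect \<Rightarrow> 'v expect" where
  "sepcon f g = (\<lambda>(s,h). Inf {f (s,h1) + g (s,h2) | h1 h2.
       is_heap h1 \<and> is_heap h2 \<and> disj h1 h2 \<and> h = hunion h1 h2})"

definition sepimp :: "'v expect \<Rightarrow> 'v expect \<Rightarrow> 'v expect" where
  "sepimp f g = (\<lambda>(s,h). Sup {tminus (g (s, hunion h h')) (f (s,h')) | h'.
       is_heap h' \<and> disj h h'})"

definition pointsto :: "'v expr \<Rightarrow> 'v expr \<Rightarrow> 'v expect" where
  "pointsto e e' = (\<lambda>(s,h). if dom h = {e s} \<and> h (e s) = Some (e' s) then 0 else \<infinity>)"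

definition pointsto_any :: "'v expr \<Rightarrow> 'v expect" where
  "pointsto_any e = (\<lambda>(s,h). if dom h = {e s} then 0 else \<infinity>)"

definition ert_store :: "'v expr \<Rightarrow> 'v expr \<Rightarrow> 'v expect \<Rightarrow> 'v expect" where
  "ert_store e e' f = sepcon (pointsto_any e) (sepimp (pointsto e e') f)"

end

theory Submission
  imports Defs
begin

lemma tminus_0: "tminus a 0 = a"
  by (auto simp: tminus_def)

lemma tminus_inf: "tminus a \<infinity> = 0"
  by (auto simp: tminus_def)

lemma sepimp_pt:
  assumes hh: "is_heap h2" and l0: "l \<noteq> 0" and ln: "l \<notin> dom h2" and el: "e s = l"
  shows "sepimp (pointsto e e') f (s,h2) = f (s, h2(l \<mapsto> e' s))"
proof -
  let ?S = "{tminus (f (s, hunion h2 h')) (pointsto e e' (s,h')) | h'. is_heap h' \<and> disj h2 h'}"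
  let ?F = "f (s, h2(l \<mapsto> e' s))"
  have mem: "?F \<in> ?S"
  proof -
    have "is_heap [l \<mapsto> e' s]" using l0 by (auto simp: is_heap_def)
    moreover have "disj h2 [l \<mapsto> e' s]" using ln by (auto simp: disj_def)
    moreover have "hunion h2 [l \<mapsto> e' s] = h2(l \<mapsto> e' s)" by (simp add: hunion_def)
    moreover have "pointsto e e' (s, [l \<mapsto> e' s]) = 0" using el by (simp add: pointsto_def)
    ultimately show ?thesis by (metis (mono_tags, lifting) mem_Collect_eq tminus_0)
  qed
  have sub: "x \<le> ?F" if xin: "x \<in> ?S" for x
  proof -
    obtain h' where x: "x = tminus (f (s, hunion h2 h')) (pointsto e e' (s,h'))" using xin by blast
    show ?thesis
    proof (cases "dom h' = {e s} \<and> h' (e s) = Some (e' s)")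
      case True
      then have "h' = [l \<mapsto> e' s]" using el by (auto simp: fun_eq_iff)
      then show ?thesis using x el by (simp add: pointsto_def hunion_def tminus_0)
    next
      case False
      then show ?thesis using x by (auto simp: pointsto_def tminus_def)
    qed
  qed
  have "Sup ?S = ?F"
    by (intro antisym Sup_least Sup_upper mem) (rule sub, assumption)
  then show ?thesis by (simp add: sepimp_def)
qed

theorem mainTheorem14:
  fixes s :: "('v::finite) stack" and h :: heap and f :: "'v expect"
    and e e' :: "'v expr"
  assumes "is_heap h"
  shows "ert_store e e' f (s,h) =
           (if e s \<in> dom h then f (s, h(e s \<mapsto> e' s)) else \<infinity>)"
proof -
  let ?G = "sepimp (pointsto e e') f"
  let ?T = "{pointsto_any e (s,h1) + ?G (s,h2) | h1 h2.
       is_heap h1 \<and> is_heap h2 \<and> disj h1 h2 \<and> h = hunion h1 h2}"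
  have E: "ert_store e e' f (s,h) = Inf ?T" by (simp add: ert_store_def sepcon_def)
  show ?thesis
  proof (cases "e s \<in> dom h")
    case False
    have "x = \<infinity>" if xin: "x \<in> ?T" for x
    proof -
      obtain h1 h2 where x: "x = pointsto_any e (s,h1) + ?G (s,h2)" and
        "h = hunion h1 h2" by (use xin in blast)
      then have "dom h1 \<noteq> {e s}" using False by (auto simp: hunion_def)
      then show ?thesis using x by (simp add: pointsto_any_def)
    qed
    then have "Inf ?T = \<infinity>" by (metis (no_types, lifting) Inf_top_conv(1) infinity_ennreal_def)
    then show ?thesis using False E by simp
  next
    case True
    let ?l = "e s"
    obtain v where hv: "h ?l = Some v" using True by auto
    let ?h2 = "h |` (- {?l})"
    let ?h1 = "[?l \<mapsto> v]"
    have l0: "?l \<noteq> 0" using assms True by (auto simp: is_heap_def)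
    have h2h: "is_heap ?h2" using assms by (auto simp: is_heap_def)
    have G: "?G (s, ?h2) = f (s, h(?l \<mapsto> e' s))"
    proof -
      have "?G (s, ?h2) = f (s, ?h2(?l \<mapsto> e' s))"
        by (rule sepimp_pt[OF h2h l0]) auto
      also have "?h2(?l \<mapsto> e' s) = h(?l \<mapsto> e' s)" by (auto simp: fun_eq_iff restrict_map_def)
      finally show ?thesis .
    qed
    have mem: "f (s, h(?l \<mapsto> e' s)) \<in> ?T"
    proof -
      have "is_heap ?h1" using l0 by (auto simp: is_heap_def)
      moreover have "disj ?h1 ?h2" by (auto simp: disj_def)
      moreover have "h = hunion ?h1 ?h2" using hv
        by (auto simp: hunion_def fun_eq_iff restrict_map_def map_add_def split: option.splits)
      moreover have "pointsto_any e (s, ?h1) = 0" by (simp add: pointsto_any_def)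
      ultimately show ?thesis using h2h G
        by (smt (verit, del_insts) add_0 mem_Collect_eq)
    qed
    have low: "f (s, h(?l \<mapsto> e' s)) \<le> x" if xin: "x \<in> ?T" for x
    proof -
      obtain h1 h2 where x: "x = pointsto_any e (s,h1) + ?G (s,h2)" and
        hh: "h = hunion h1 h2" and d: "disj h1 h2" and h2h': "is_heap h2"
        by (use xin in blast)
      show ?thesis
      proof (cases "dom h1 = {?l}")
        case False
        then show ?thesis using x by (simp add: pointsto_any_def)
      next
        case True
        have "h2 = ?h2"
        proof
          fix k show "h2 k = ?h2 k"
          proof (cases "k = ?l")
            case True
            then show ?thesis using d \<open>dom h1 = {?l}\<close> by (auto simp: disj_def restrict_map_def)
          next
            case False
            then have "k \<notin> dom h1" using \<open>dom h1 = {?l}\<close> by auto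
            then show ?thesis using False hh
              by (auto simp: hunion_def restrict_map_def map_add_def split: option.splits)
          qed
        qed
        then show ?thesis using x G True by (simp add: pointsto_any_def)
      qed
    qed
    have "Inf ?T = f (s, h(?l \<mapsto> e' s))"
      by (intro antisym Inf_lower Inf_greatest mem) (rule low, assumption)
    then show ?thesis using True E by simp
  qed
qed

end
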